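(* Let $X,Y$ be $n\times n$ positive semidefinite complex matrices and let $Q$ be an $n\times n$ complex matrix with operator norm $\|Q\|_\infty\le 1$. Then for every $t\in(0,\infty)$, \[ 4\,|\operatorname{tr}(QXY)|\le t\,\operatorname{tr}(X^2+Y^2)+\frac{1}{t}\operatorname{tr}(XY+YX). \]
   Context: $\|Q\|_\infty$ denotes the operator (spectral) norm, i.e. the largest singular value of $Q$; $\operatorname{tr}$ denotes the trace. *)

theory Defs
  imports "HOL-Analysis.Analysis" "HOL-Library.Complex_Order"
begin

text \<open>Positive semidefinite complex matrix: v^* X v is a nonnegative real for every v
  (in the order of HOL-Library.Complex_Order, 0 \<le> z means z real and Re z \<ge> 0).\<close>
definition psd_cmat :: "complex^'n^'n \<Rightarrow> bool" where
  "psd_cmat X \<longleftrightarrow> (\<forall>v::complex^'n. 0 \<le> (\<Sum>i\<in>UNIV. cnj (v $ i) * (X *v v) $ i))"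

definition op_norm :: "complex^'n^'n \<Rightarrow> real" where
  "op_norm Q = onorm (\<lambda>v::complex^'n. Q *v v)"

end

theory Submission
  imports Defs
begin


definition cip :: "complex^'n \<Rightarrow> complex^'n \<Rightarrow> complex" where
  "cip u v = (\<Sum>i\<in>UNIV. cnj (u $ i) * v $ i)"

lemma psd_cip: "psd_cmat X \<longleftrightarrow> (\<forall>v. 0 \<le> cip v (X *v v))"
  by (simp add: psd_cmat_def cip_def)

lemma cip_add_left: "cip (u + w) v = cip u v + cip w v"
  by (simp add: cip_def sum.distrib distrib_right)
lemma cip_add_right: "cip u (v + w) = cip u v + cip u w"
  by (simp add: cip_def sum.distrib distrib_left)
lemma cip_scale_left: "cip (c *s u) v = cnj c * cip u v"
  by (simp add: cip_def sum_distrib_left mult_ac)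
lemma cip_scale_right: "cip u (c *s v) = c * cip u v"
  by (simp add: cip_def sum_distrib_left mult_ac)
lemma cip_cnj: "cip v u = cnj (cip u v)"
  by (simp add: cip_def mult_ac)
lemma cip_self: "cip u u = of_real ((norm u)^2)"
proof -
  have "(norm u)^2 = (\<Sum>i\<in>UNIV. (cmod (u$i))^2)"
    by (simp add: norm_vec_def L2_set_def sum_nonneg)
  moreover have "cnj (u$i) * u$i = of_real ((cmod (u$i))^2)" for i
    by (metis complex_norm_square mult.commute complex_mult_cnj)
  ultimately show ?thesis by (simp add: cip_def)
qed

lemma real_nonneg_le: "0 \<le> (z::complex) \<longleftrightarrow> Im z = 0 \<and> 0 \<le> Re z"
  by (auto simp: less_eq_complex_def)

lemma quad_expand:
  "cip (u + c *s v) (X *v (u + c *s v)) =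
     cip u (X *v u) + c * cip u (X *v v) + cnj c * cip v (X *v u) + cnj c * c * cip v (X *v v)"
  by (simp add: algebra_simps vector_scalar_commute cip_add_left cip_add_right cip_scale_left cip_scale_right)

lemma psd_herm:
  assumes "psd_cmat X"
  shows "cip v (X *v u) = cnj (cip u (X *v v))"
proof -
  let ?B = "\<lambda>u v. cip u (X *v v)"
  have r: "Im (?B w w) = 0" for w using assms by (simp add: psd_cip real_nonneg_le)
  have e1: "?B (u + 1 *s v) (u + 1 *s v) = ?B u u + ?B u v + ?B v u + ?B v v"
    using quad_expand[of u 1 v X] by simp
  have e2: "?B (u + \<i> *s v) (u + \<i> *s v) = ?B u u + \<i> * ?B u v - \<i> * ?B v u + ?B v v"
    using quad_expand[of u \<i> v X] by simp
  have "Im (?B u v + ?B v u) = 0" using e1 r[of u] r[of v] r[of "u + 1 *s v"] by simp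
  moreover have "Re (?B u v - ?B v u) = 0" using e2 r[of u] r[of v] r[of "u + \<i> *s v"] by simp
  ultimately show ?thesis by (simp add: complex_eq_iff)
qed

lemma real_cs_aux:
  fixes p q m :: real
  assumes "p \<ge> 0" "q \<ge> 0" "m \<ge> 0" "\<And>s. 0 \<le> p - 2 * s * m + s^2 * m * q"
  shows "m \<le> p * q"
proof (cases "q = 0")
  case True
  show ?thesis
  proof (rule ccontr)
    assume "\<not> m \<le> p * q"
    then have "m > 0" using True by simp
    have "0 \<le> p - 2 * ((p+1)/(2*m)) * m" using assms(4)[of "(p+1)/(2*m)"] True by simp
    also have "2 * ((p+1)/(2*m)) * m = p + 1" using \<open>m > 0\<close> by simp
    finally show False by linarith
  qed
next
  case False
  then have qp: "q > 0" using assms by simp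
  have "0 \<le> p - 2 * (1/q) * m + (1/q)^2 * m * q" by (rule assms(4))
  also have "\<dots> = p - m / q" using qp by (simp add: field_simps power2_eq_square)
  finally have "m / q \<le> p" by linarith
  then show ?thesis using qp by (simp add: divide_le_eq mult.commute)
qed



lemma psd_cs:
  assumes "psd_cmat X"
  shows "(cmod (cip u (X *v v)))^2 \<le> Re (cip u (X *v u)) * Re (cip v (X *v v))"
proof -
  let ?B = "\<lambda>u v. cip u (X *v v)"
  define b where "b = ?B u v"
  have r: "Im (?B w w) = 0 \<and> 0 \<le> Re (?B w w)" for w using assms by (simp add: psd_cip real_nonneg_le)
  have h: "?B v u = cnj b" unfolding b_def by (rule psd_herm[OF assms])
  show ?thesis unfolding b_def[symmetric]
  proof (rule real_cs_aux)
    show "0 \<le> Re (?B u u)" "0 \<le> Re (?B v v)" "0 \<le> (cmod b)^2" using r by auto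
    fix s :: real
    have bb: "b * cnj b = of_real ((cmod b)^2)" using complex_norm_square[of b] by simp
    have "?B (u + (- of_real s * cnj b) *s v) (u + (- of_real s * cnj b) *s v)
       = ?B u u - 2 * of_real s * (b * cnj b) + (of_real s)^2 * (b * cnj b) * ?B v v"
      unfolding quad_expand h b_def[symmetric] by (simp add: algebra_simps power2_eq_square)
    also have "\<dots> = ?B u u - of_real (2 * s * (cmod b)^2) + of_real (s^2 * (cmod b)^2) * ?B v v"
      unfolding bb by simp
    finally have "Re (?B (u + (- of_real s * cnj b) *s v) (u + (- of_real s * cnj b) *s v))
       = Re (?B u u) - 2 * s * (cmod b)^2 + s^2 * (cmod b)^2 * Re (?B v v)"
      by simp
    then show "0 \<le> Re (?B u u) - 2 * s * (cmod b)^2 + s^2 * (cmod b)^2 * Re (?B v v)"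
      using r[of "u + (- of_real s * cnj b) *s v"] by simp
  qed
qed




definition outer :: "complex^'n \<Rightarrow> complex^'n^'n" where
  "outer y = (\<chi> i j. y$i * cnj (y$j))"

lemma mv_axis: "(A::complex^'n^'n) *v axis k 1 = column k A"
  by (simp add: matrix_vector_mult_def axis_def column_def vec_eq_iff if_distrib cong: if_cong)

lemma cip_axis: "cip (axis i 1) w = w $ i"
proof -
  have "cip (axis i 1) w = (\<Sum>ia\<in>UNIV. if ia = i then w$ia else 0)"
    unfolding cip_def axis_def by (rule sum.cong) auto
  then show ?thesis by simp
qed

lemma outer_mv: "outer y *v v = cip y v *s y"
  by (simp add: outer_def matrix_vector_mult_def cip_def vec_eq_iff sum_distrib_left mult_ac)

lemma entry_cip: "(A::complex^'n^'n) $ i $ j = cip (axis i 1) (A *v axis j 1)"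
  by (simp add: mv_axis cip_axis column_def)

lemma psd_entry_herm:
  assumes "psd_cmat Y" shows "Y $ k $ j = cnj (Y $ j $ k)"
  using psd_herm[OF assms, of "axis k 1" "axis j 1"] by (simp add: entry_cip)

lemma psd_diag: assumes "psd_cmat Y" shows "Im (Y$i$i) = 0" "0 \<le> Re (Y$i$i)"
  using assms by (simp_all add: psd_cip real_nonneg_le entry_cip)




lemma outer_0: "outer 0 = 0"
  by (simp add: outer_def vec_eq_iff)

lemma psd_step:
  assumes psd: "psd_cmat Y" and supp: "\<forall>j k. (j \<notin> insert i S \<or> k \<notin> insert i S) \<longrightarrow> Y$j$k = 0"
  shows "\<exists>y0. psd_cmat (Y - outer y0) \<and> (\<forall>j k. (j \<notin> S \<or> k \<notin> S) \<longrightarrow> (Y - outer y0)$j$k = 0)"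
proof -
  define a where "a = Re (Y$i$i)"
  have Yii: "Y$i$i = of_real a" using psd_diag(1)[OF psd, of i] by (simp add: a_def complex_eq_iff)
  have a0: "a \<ge> 0" using psd_diag(2)[OF psd, of i] by (simp add: a_def)
  have herm: "\<And>j k. Y$k$j = cnj (Y$j$k)" using psd_entry_herm[OF psd] .
  show ?thesis
  proof (cases "a = 0")
    case True
    have row: "Y$i$k = 0" for k
    proof -
      have "(cmod (cip (axis i 1) (Y *v axis k 1)))^2 \<le> Re (cip (axis i 1) (Y *v axis i 1)) * Re (cip (axis k 1) (Y *v axis k 1))"
        by (rule psd_cs[OF psd])
      then have "(cmod (Y$i$k))^2 \<le> 0" using True by (simp add: entry_cip[symmetric] a_def)
      then show ?thesis by simp
    qed
    have col: "Y$k$i = 0" for k using herm[of i k] row[of k] by simp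
    have "\<forall>j k. (j \<notin> S \<or> k \<notin> S) \<longrightarrow> (Y - outer 0)$j$k = 0"
    proof (intro allI impI)
      fix j k assume "j \<notin> S \<or> k \<notin> S"
      then show "(Y - outer 0)$j$k = 0"
        by (cases "j = i"; cases "k = i") (use supp row col in \<open>auto simp: outer_0\<close>)
    qed
    then show ?thesis using psd by (intro exI[of _ 0]) (simp add: outer_0)
  next
    case False
    then have ap: "a > 0" using a0 by simp
    define y0 where "y0 = complex_of_real (1 / sqrt a) *s column i Y"
    have y0j: "y0$j = of_real (1 / sqrt a) * Y$j$i" for j by (simp add: y0_def column_def)
    have entry: "(Y - outer y0)$j$k = Y$j$k - Y$j$i * Y$i$k / of_real a" for j k
    proof -
      have s0: "sqrt a * sqrt a = a" using ap by simp
      have s1: "(1/sqrt a) * (1/sqrt a) = 1/a" using s0 by (simp add: field_simps)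
      have s: "complex_of_real (1/sqrt a) * complex_of_real (1/sqrt a) = 1 / of_real a"
        using s1 by (metis of_real_mult of_real_divide of_real_1)
      have "(outer y0)$j$k = (complex_of_real (1/sqrt a) * complex_of_real (1/sqrt a)) * (Y$j$i * cnj (Y$k$i))"
        by (simp add: outer_def y0j mult_ac)
      also have "\<dots> = Y$j$i * Y$i$k / of_real a" unfolding s herm[of i k, symmetric] by simp
      finally show ?thesis by simp
    qed
    have P: "psd_cmat (Y - outer y0)"
      unfolding psd_cip
    proof
      fix v
      define g where "g = cip (axis i 1) (Y *v v)"
      have cs: "(cmod g)^2 \<le> a * Re (cip v (Y *v v))"
        using psd_cs[OF psd, of "axis i 1" v] by (simp add: g_def entry_cip[symmetric] a_def)
      have c1: "cip (column i Y) v = g"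
        using psd_herm[OF psd, of v "axis i 1"] by (simp add: mv_axis[symmetric] cip_cnj[of v] g_def)
      have c2: "cip y0 v = of_real (1 / sqrt a) * g"
        by (simp add: y0_def cip_scale_left c1)
      have "cip v ((Y - outer y0) *v v) = cip v (Y *v v) - cip y0 v * cip v y0"
        by (simp add: matrix_vector_mult_diff_rdistrib outer_mv cip_def sum_subtractf sum_distrib_left mult_ac right_diff_distrib)
      also have "cip y0 v * cip v y0 = of_real ((cmod g)^2 / a)"
      proof -
        have "cip y0 v * cip v y0 = cip y0 v * cnj (cip y0 v)" by (simp add: cip_cnj[of v])
        also have "\<dots> = of_real ((cmod (cip y0 v))^2)" using complex_norm_square[of "cip y0 v"] by simp
        also have "(cmod (cip y0 v))^2 = (cmod g)^2 / a" using ap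
          by (simp add: c2 norm_divide power_divide)
        finally show ?thesis .
      qed
      finally have eq: "cip v ((Y - outer y0) *v v) = cip v (Y *v v) - of_real ((cmod g)^2 / a)" .
      have i0: "Im (cip v (Y *v v)) = 0" "0 \<le> Re (cip v (Y *v v))"
        using psd by (auto simp: psd_cip real_nonneg_le)
      have "(cmod g)^2 / a \<le> Re (cip v (Y *v v))" using cs ap by (simp add: divide_le_eq mult.commute)
      then show "0 \<le> cip v ((Y - outer y0) *v v)" unfolding eq using i0 by (simp add: real_nonneg_le)
    qed
    have Supp: "\<forall>j k. (j \<notin> S \<or> k \<notin> S) \<longrightarrow> (Y - outer y0)$j$k = 0"
    proof (intro allI impI)
      fix j k assume jk: "j \<notin> S \<or> k \<notin> S"
      show "(Y - outer y0)$j$k = 0"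
      proof (cases "j = i")
        case True then show ?thesis using ap by (simp only: entry) (simp add: Yii)
      next
        case ji: False
        show ?thesis
        proof (cases "k = i")
          case True then show ?thesis using ap by (simp only: entry) (simp add: Yii)
        next
          case False
          then have "j \<notin> insert i S \<or> k \<notin> insert i S" using jk ji by auto
          then show ?thesis using supp by (simp only: entry) auto
        qed
      qed
    qed
    show ?thesis using P Supp by blast
  qed
qed

lemma psd_decomp_aux:
  assumes "finite S"
  shows "psd_cmat Y \<Longrightarrow> (\<forall>j k. (j \<notin> S \<or> k \<notin> S) \<longrightarrow> Y$j$k = 0) \<Longrightarrow> \<exists>y. Y = (\<Sum>b\<in>S. outer (y b))"
  using assms
proof (induction S arbitrary: Y rule: finite_induct)
  case empty
  then show ?case by (auto simp: vec_eq_iff)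
next
  case (insert i S)
  obtain y0 where y0: "psd_cmat (Y - outer y0)" "\<forall>j k. (j \<notin> S \<or> k \<notin> S) \<longrightarrow> (Y - outer y0)$j$k = 0"
    using psd_step[OF insert.prems(1) insert.prems(2)] by blast
  obtain y where y: "Y - outer y0 = (\<Sum>b\<in>S. outer (y b))" using insert.IH[OF y0] by blast
  have "(\<Sum>b\<in>insert i S. outer ((y(i := y0)) b)) = outer y0 + (\<Sum>b\<in>S. outer ((y(i := y0)) b))"
    using insert.hyps by (simp add: sum.insert)
  also have "(\<Sum>b\<in>S. outer ((y(i := y0)) b)) = (\<Sum>b\<in>S. outer (y b))"
    using insert.hyps by (intro sum.cong) auto
  finally have "(\<Sum>b\<in>insert i S. outer ((y(i := y0)) b)) = Y" using y by (simp add: algebra_simps)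
  then show ?case by metis
qed

lemma psd_decomp:
  fixes Y :: "complex^'n^'n"
  assumes "psd_cmat Y" shows "\<exists>y. Y = (\<Sum>b\<in>(UNIV::'n set). outer (y b))"
  using psd_decomp_aux[of "UNIV::'n set" Y] assms by simp




definition cadj :: "complex^'n^'n \<Rightarrow> complex^'n^'n" where
  "cadj A = (\<chi> i j. cnj (A$j$i))"

definition frob :: "complex^'n^'n \<Rightarrow> real" where
  "frob A = (\<Sum>i\<in>UNIV. \<Sum>j\<in>UNIV. (cmod (A$i$j))^2)"

lemma trace_mm: "trace ((A::complex^'n^'n) ** B) = (\<Sum>i\<in>UNIV. \<Sum>k\<in>UNIV. A$i$k * B$k$i)"
  by (simp add: trace_def matrix_matrix_mult_def)

lemma trace_outer: "trace (A ** outer y) = cip y (A *v y)"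
  by (simp add: trace_mm outer_def cip_def matrix_vector_mult_def sum_distrib_left mult_ac)

lemma trace_sum: "finite S \<Longrightarrow> trace ((A::complex^'n^'n) ** (\<Sum>b\<in>S. f b)) = (\<Sum>b\<in>S. trace (A ** f b))"
proof (induction S rule: finite_induct)
  case empty
  then show ?case by (simp add: trace_def)
next
  case (insert x F)
  then show ?case by (simp add: matrix_add_ldistrib trace_add)
qed

lemma cip_adj: "cip u (A *v v) = cip (cadj A *v u) v"
proof -
  have "cip u (A *v v) = (\<Sum>i\<in>UNIV. \<Sum>k\<in>UNIV. cnj (u$i) * A$i$k * v$k)"
    by (simp add: cip_def matrix_vector_mult_def sum_distrib_left mult_ac)
  also have "\<dots> = (\<Sum>k\<in>UNIV. \<Sum>i\<in>UNIV. cnj (u$i) * A$i$k * v$k)" by (rule sum.swap)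
  also have "\<dots> = cip (cadj A *v u) v"
    by (simp add: cip_def cadj_def matrix_vector_mult_def sum_distrib_right sum_distrib_left mult_ac)
  finally show ?thesis .
qed

lemma cadj_mult: "cadj ((A::complex^'n^'n) ** B) = cadj B ** cadj A"
  by (simp add: cadj_def matrix_matrix_mult_def vec_eq_iff mult.commute)

lemma cadj_cadj: "cadj (cadj A) = A"
  by (simp add: cadj_def vec_eq_iff)

lemma psd_cadj: "psd_cmat X \<Longrightarrow> cadj X = X"
proof -
  assume "psd_cmat X"
  then have "\<forall>i j. cnj (X$j$i) = X$i$j" using psd_entry_herm by (metis complex_cnj_cnj)
  then show ?thesis by (simp add: cadj_def vec_eq_iff)
qed

lemma frob_cadj: "frob (cadj A) = frob A"
proof -
  have "frob (cadj A) = (\<Sum>i\<in>UNIV. \<Sum>j\<in>UNIV. (cmod (A$j$i))^2)"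
    unfolding frob_def cadj_def by simp
  also have "\<dots> = frob A" unfolding frob_def by (rule sum.swap)
  finally show ?thesis .
qed

lemma frob_col: "frob A = (\<Sum>j\<in>UNIV. (norm (column j A))^2)"
proof -
  have "(norm (column j A))^2 = (\<Sum>i\<in>UNIV. (cmod (A$i$j))^2)" for j
    by (simp add: norm_vec_def L2_set_def sum_nonneg column_def)
  then have "(\<Sum>j\<in>UNIV. (norm (column j A))^2) = (\<Sum>j\<in>UNIV. \<Sum>i\<in>UNIV. (cmod (A$i$j))^2)" by simp
  also have "\<dots> = frob A" unfolding frob_def by (rule sum.swap)
  finally show ?thesis by simp
qed

lemma column_mm: "column j ((Q::complex^'n^'n) ** A) = Q *v column j A"
  by (simp add: column_def matrix_matrix_mult_def matrix_vector_mult_def vec_eq_iff)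

lemma frob_mult_le:
  assumes "op_norm Q \<le> 1" shows "frob ((Q::complex^'n^'n) ** A) \<le> frob A"
proof -
  have bl: "bounded_linear (\<lambda>v. Q *v v)" by blast
  have "norm (Q *v c) \<le> norm c" for c :: "complex^'n"
  proof -
    have "norm (Q *v c) \<le> op_norm Q * norm c" unfolding op_norm_def by (rule onorm[OF bl])
    also have "\<dots> \<le> 1 * norm c" by (rule mult_right_mono[OF assms]) simp
    finally show ?thesis by simp
  qed
  then have "(norm (column j (Q ** A)))^2 \<le> (norm (column j A))^2" for j
    unfolding column_mm by (simp add: power_mono)
  then show ?thesis unfolding frob_col by (rule sum_mono)
qed

lemma trace_le_frob: "cmod (trace ((A::complex^'n^'n) ** B)) \<le> (frob A + frob B) / 2"
proof -
  have "cmod (trace (A ** B)) \<le> (\<Sum>i\<in>UNIV. cmod (\<Sum>k\<in>UNIV. A$i$k * B$k$i))"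
    unfolding trace_mm by (rule norm_sum)
  also have "\<dots> \<le> (\<Sum>i\<in>UNIV. \<Sum>k\<in>UNIV. ((cmod (A$i$k))^2 + (cmod (B$k$i))^2) / 2)"
  proof (rule sum_mono)
    fix i
    have "cmod (\<Sum>k\<in>UNIV. A$i$k * B$k$i) \<le> (\<Sum>k\<in>UNIV. cmod (A$i$k * B$k$i))" by (rule norm_sum)
    also have "\<dots> \<le> (\<Sum>k\<in>UNIV. ((cmod (A$i$k))^2 + (cmod (B$k$i))^2) / 2)"
    proof (rule sum_mono)
      fix k
      have "0 \<le> (cmod (A$i$k) - cmod (B$k$i))^2" by simp
      then show "cmod (A$i$k * B$k$i) \<le> ((cmod (A$i$k))^2 + (cmod (B$k$i))^2) / 2"
        by (simp add: norm_mult power2_eq_square algebra_simps)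
    qed
    finally show "cmod (\<Sum>k\<in>UNIV. A$i$k * B$k$i) \<le> (\<Sum>k\<in>UNIV. ((cmod (A$i$k))^2 + (cmod (B$k$i))^2) / 2)" .
  qed
  also have "\<dots> = (frob A + (\<Sum>i\<in>UNIV. \<Sum>k\<in>UNIV. (cmod (B$k$i))^2)) / 2"
    by (simp add: frob_def sum.distrib sum_divide_distrib[symmetric] add_divide_distrib)
  also have "(\<Sum>i\<in>UNIV. \<Sum>k\<in>UNIV. (cmod (B$k$i))^2) = frob B"
    unfolding frob_def by (rule sum.swap)
  finally show ?thesis .
qed

lemma trace_sq_frob: assumes "psd_cmat X" shows "trace (X ** X) = of_real (frob X)"
proof -
  have "X$i$k * X$k$i = of_real ((cmod (X$i$k))^2)" for i k
    using psd_entry_herm[OF assms, of k i] complex_norm_square[of "X$i$k"] by simp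
  then show ?thesis by (simp add: trace_mm frob_def)
qed




lemma final_real:
  fixes c R P S t :: real
  assumes "0 \<le> c" "c \<le> sqrt R * sqrt P" "0 \<le> R" "R \<le> S / 2" "0 \<le> P" "t > 0"
  shows "4 * c \<le> t * S + 1 / t * (2 * P)"
proof -
  have S0: "0 \<le> S" using assms by linarith
  have "c^2 \<le> (sqrt R * sqrt P)^2" using assms by (simp add: power_mono)
  also have "\<dots> = R * P" using assms by (simp add: power_mult_distrib)
  also have "\<dots> \<le> S / 2 * P" by (rule mult_right_mono[OF assms(4) assms(5)])
  finally have c2: "c^2 \<le> S / 2 * P" .
  have "(t * S + 1 / t * (2 * P))^2 = (t * S - 1 / t * (2 * P))^2 + 8 * S * P"
    using assms by (simp add: power2_eq_square field_simps)
  also have "\<dots> \<ge> 8 * S * P" by simp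
  finally have "(4 * c)^2 \<le> (t * S + 1 / t * (2 * P))^2" using c2 by (simp add: power_mult_distrib)
  moreover have "0 \<le> t * S + 1 / t * (2 * P)" using assms S0 by simp
  ultimately show ?thesis by (rule power2_le_imp_le)
qed

theorem lemma2:
  fixes X Y Q :: "complex^'n^'n" and t :: real
  assumes "psd_cmat X" and "psd_cmat Y" and "op_norm Q \<le> 1" and "t > 0"
  shows "complex_of_real (4 * cmod (trace (Q ** X ** Y)))
           \<le> complex_of_real t * trace (X ** X + Y ** Y)
             + complex_of_real (1 / t) * trace (X ** Y + Y ** X)"
proof -
  obtain y where Ydec: "Y = (\<Sum>b\<in>(UNIV::'n set). outer (y b))" using psd_decomp[OF assms(2)] by blast
  have trY: "trace (A ** Y) = (\<Sum>b\<in>UNIV. cip (y b) (A *v y b))" for A :: "complex^'n^'n"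
    unfolding Ydec by (simp add: trace_sum trace_outer)
  define w where "w b = cadj Q *v y b" for b
  define \<alpha> where "\<alpha> b = Re (cip (w b) (X *v w b))" for b
  define \<beta> where "\<beta> b = Re (cip (y b) (X *v y b))" for b
  have psdX: "Im (cip v (X *v v)) = 0 \<and> 0 \<le> Re (cip v (X *v v))" for v
    using assms(1) by (simp add: psd_cip real_nonneg_le)
  have an: "0 \<le> \<alpha> b" for b using psdX by (simp add: \<alpha>_def)
  have bn: "0 \<le> \<beta> b" for b using psdX by (simp add: \<beta>_def)
  have T: "trace (Q ** X ** Y) = (\<Sum>b\<in>UNIV. cip (w b) (X *v y b))"
  proof -
    have "cip (y b) ((Q ** X) *v y b) = cip (w b) (X *v y b)" for b
      using cip_adj[of "y b" Q "X *v y b"] by (simp add: w_def matrix_vector_mul_assoc)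
    then show ?thesis unfolding trY by simp
  qed
  define Pp where "Pp = (\<Sum>b\<in>UNIV. \<beta> b)"
  define Rr where "Rr = (\<Sum>b\<in>UNIV. \<alpha> b)"
  have Pn: "0 \<le> Pp" unfolding Pp_def using bn by (simp add: sum_nonneg)
  have Rn: "0 \<le> Rr" unfolding Rr_def using an by (simp add: sum_nonneg)
  have P: "trace (X ** Y) = of_real Pp"
  proof -
    have "cip (y b) (X *v y b) = of_real (\<beta> b)" for b
      using psdX[of "y b"] by (simp add: \<beta>_def complex_eq_iff)
    then show ?thesis unfolding trY Pp_def by simp
  qed
  define M where "M = Q ** X ** cadj Q"
  have R: "trace (M ** Y) = of_real Rr"
  proof -
    have "cip (y b) (M *v y b) = of_real (\<alpha> b)" for b
    proof -
      have "cip (y b) (M *v y b) = cip (y b) (Q *v (X *v w b))"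
        by (simp add: M_def w_def matrix_vector_mul_assoc matrix_mul_assoc)
      also have "\<dots> = cip (w b) (X *v w b)"
        using cip_adj[of "y b" Q "X *v w b"] by (simp add: w_def)
      also have "\<dots> = of_real (\<alpha> b)"
        using psdX[of "w b"] by (simp add: \<alpha>_def complex_eq_iff)
      finally show ?thesis .
    qed
    then show ?thesis unfolding trY Rr_def by simp
  qed
  have fM: "frob M \<le> frob X"
  proof -
    have "frob M = frob (Q ** (X ** cadj Q))" by (simp add: M_def matrix_mul_assoc)
    also have "\<dots> \<le> frob (X ** cadj Q)" by (rule frob_mult_le[OF assms(3)])
    also have "\<dots> = frob (Q ** X)"
      by (metis frob_cadj cadj_mult cadj_cadj psd_cadj[OF assms(1)])
    also have "\<dots> \<le> frob X" by (rule frob_mult_le[OF assms(3)])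
    finally show ?thesis .
  qed
  have RS: "Rr \<le> (frob X + frob Y) / 2"
  proof -
    have "Rr \<le> cmod (trace (M ** Y))" unfolding R by simp
    also have "\<dots> \<le> (frob M + frob Y) / 2" by (rule trace_le_frob)
    also have "\<dots> \<le> (frob X + frob Y) / 2" using fM by simp
    finally show ?thesis .
  qed
  have cT: "cmod (trace (Q ** X ** Y)) \<le> sqrt Rr * sqrt Pp"
  proof -
    have cs: "cmod (cip (w b) (X *v y b)) \<le> sqrt (\<alpha> b) * sqrt (\<beta> b)" for b
    proof -
      have "(cmod (cip (w b) (X *v y b)))^2 \<le> \<alpha> b * \<beta> b"
        unfolding \<alpha>_def \<beta>_def by (rule psd_cs[OF assms(1)])
      then have "cmod (cip (w b) (X *v y b)) \<le> sqrt (\<alpha> b * \<beta> b)" by (simp add: real_le_rsqrt)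
      then show ?thesis by (simp add: real_sqrt_mult)
    qed
    have "cmod (trace (Q ** X ** Y)) \<le> (\<Sum>b\<in>UNIV. cmod (cip (w b) (X *v y b)))"
      unfolding T by (rule norm_sum)
    also have "\<dots> \<le> (\<Sum>b\<in>UNIV. \<bar>sqrt (\<alpha> b)\<bar> * \<bar>sqrt (\<beta> b)\<bar>)"
    proof (rule sum_mono)
      fix b show "cmod (cip (w b) (X *v y b)) \<le> \<bar>sqrt (\<alpha> b)\<bar> * \<bar>sqrt (\<beta> b)\<bar>"
        using cs[of b] an[of b] bn[of b] by simp
    qed
    also have "\<dots> \<le> L2_set (\<lambda>b. sqrt (\<alpha> b)) UNIV * L2_set (\<lambda>b. sqrt (\<beta> b)) UNIV"
      by (rule L2_set_mult_ineq)
    also have "L2_set (\<lambda>b. sqrt (\<alpha> b)) UNIV = sqrt Rr"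
      unfolding L2_set_def Rr_def using an by simp
    also have "L2_set (\<lambda>b. sqrt (\<beta> b)) UNIV = sqrt Pp"
      unfolding L2_set_def Pp_def using bn by simp
    finally show ?thesis .
  qed
  have tr1: "trace (X ** X + Y ** Y) = of_real (frob X + frob Y)"
    by (simp add: trace_add trace_sq_frob[OF assms(1)] trace_sq_frob[OF assms(2)])
  have tr2: "trace (X ** Y + Y ** X) = of_real (2 * Pp)"
    by (simp add: trace_add trace_mul_sym[of Y X] P)
  have main: "4 * cmod (trace (Q ** X ** Y)) \<le> t * (frob X + frob Y) + 1 / t * (2 * Pp)"
    by (rule final_real[OF norm_ge_zero cT Rn RS Pn assms(4)])
  have "complex_of_real t * trace (X ** X + Y ** Y) + complex_of_real (1 / t) * trace (X ** Y + Y ** X)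
      = complex_of_real (t * (frob X + frob Y) + 1 / t * (2 * Pp))"
    unfolding tr1 tr2 by simp
  then show ?thesis using main by (simp add: less_eq_complex_def)
qed


end
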